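(* For all integers $J\geq 0$ and $N\geq 0$, $\mathfrak{m}_{\mathrm{odd}}(0,2J+1;36N+r)\equiv 0\pmod 4$ for $r\in\{21,33\}$.
   Context: For $a\in\{-2,-1,0,1,2\}$ and integer $t\geq0$, the integers $\mathfrak{m}_{\mathrm{odd}}(a,t;n)$ are defined by $\sum_{n\geq0}\mathfrak{m}_{\mathrm{odd}}(a,t;n)q^n=\sum\prod_{k=1}^t\frac{q^{n_k}}{1+aq^{n_k}+q^{2n_k}}$, the sum running over all $t$-tuples of odd positive integers $n_1<n_2<\cdots<n_t$ (for $t=0$ the series is $1$). *)

theory Defs
  imports "HOL-Computational_Algebra.Formal_Power_Series"
begin

text \<open>The factor q^m / (1 + a q^m + q^(2m)) as an integer formal power series
  (the denominator has constant term 1 for m \<ge> 1, so it is invertible over int).\<close>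
definition modd_factor :: "int \<Rightarrow> nat \<Rightarrow> int fps" where
  "modd_factor a m =
     fps_X ^ m * fps_right_inverse (1 + fps_const a * fps_X ^ m + fps_X ^ (2 * m)) 1"

text \<open>Only sets of odd numbers \<le> n
  can contribute to the coefficient of q^n (each factor has order n_k), so the
  sum is truncated to those sets.\<close>
definition m_odd :: "int \<Rightarrow> nat \<Rightarrow> nat \<Rightarrow> int" where
  "m_odd a t n = fps_nth
     (\<Sum>S \<in> {S. S \<subseteq> {k. odd k \<and> k \<le> n} \<and> card S = t}.
        \<Prod>m\<in>S. modd_factor a m) n"

end

theory Submission
  imports Defs "HOL-Computational_Algebra.Polynomial"
begin
unbundle fps_syntax

fun gb :: "nat \<Rightarrow> nat \<Rightarrow> int fps" where
  "gb n 0 = 1"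
| "gb 0 (Suc j) = 0"
| "gb (Suc n) (Suc j) = gb n j + fps_X^(2*Suc j) * gb n (Suc j)"

lemma gb_zero: "n < j \<Longrightarrow> gb n j = 0"
proof (induction n arbitrary: j)
  case 0 then show ?case by (cases j) auto
next
  case (Suc n) then show ?case by (cases j) auto
qed

lemma gb_diag: "gb n n = 1"
  by (induction n) (auto simp: gb_zero)

lemma gb_ratio: "(1 - fps_X^(2*Suc j)) * gb n (Suc j) = (1 - fps_X^(2*(n-j))) * gb n j"
proof (induction n arbitrary: j)
  case 0 then show ?case by simp
next
  case (Suc n)
  show ?case
  proof (cases j)
    case 0
    have "(1 - fps_X^2) * gb n 1 = 1 - fps_X^(2*n)" using Suc.IH[of 0] by simp
    have "(1 - fps_X^2) * (1 + fps_X^2 * gb n 1) = (1 - fps_X^2) + fps_X^2 * ((1 - fps_X^2) * gb n 1)"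
      by (simp add: algebra_simps)
    also have "\<dots> = (1::int fps) - fps_X^2 * fps_X^(2*n)"
      unfolding \<open>(1 - fps_X^2) * gb n 1 = 1 - fps_X^(2*n)\<close> by (simp add: algebra_simps)
    also have "\<dots> = 1 - fps_X^(2*Suc n)" by (simp add: power_add[symmetric])
    finally have "(1 - fps_X^2) * (1 + fps_X^2 * gb n 1) = (1::int fps) - fps_X^(2*Suc n)" .
    then show ?thesis using 0 by (simp add: numeral_2_eq_2)
  next
    case (Suc i)
    show ?thesis
    proof (cases "Suc i \<le> n")
      case False
      then show ?thesis using Suc by (simp add: gb_zero)
    next
      case True
      have I1: "(1 - fps_X^(2*Suc (Suc i))) * gb n (Suc (Suc i)) = (1 - fps_X^(2*(n - Suc i))) * gb n (Suc i)"
        using Suc.IH[of "Suc i"] by simp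
      have I2: "(1 - fps_X^(2*Suc i)) * gb n (Suc i) = (1 - fps_X^(2*(n - i))) * gb n i"
        using Suc.IH[of i] by simp
      have e1: "(fps_X::int fps)^(2*Suc (Suc i)) * fps_X^(2*(n - Suc i)) = fps_X^(2* Suc n)"
      proof -
        have "2*Suc (Suc i) + 2*(n - Suc i) = 2*Suc n" using True by simp
        then show ?thesis by (metis power_add)
      qed
      have e2: "(fps_X::int fps)^(2*(n - i)) * fps_X^(2*Suc i) = fps_X^(2* Suc n)"
      proof -
        have "2*(n - i) + 2*Suc i = 2*Suc n" using True by simp
        then show ?thesis by (metis power_add)
      qed
      have "(1 - fps_X^(2*Suc (Suc i))) * gb (Suc n) (Suc (Suc i))
           = (1 - fps_X^(2*Suc (Suc i))) * gb n (Suc i) + fps_X^(2*Suc (Suc i)) * ((1 - fps_X^(2*Suc (Suc i))) * gb n (Suc (Suc i)))"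
        by (simp add: algebra_simps)
      also have "\<dots> = (1 - fps_X^(2*Suc n)) * gb n (Suc i)"
        unfolding I1 using e1 by (simp add: algebra_simps)
      finally have L: "(1 - fps_X^(2*Suc (Suc i))) * gb (Suc n) (Suc (Suc i)) = (1 - fps_X^(2*Suc n)) * gb n (Suc i)" .
      have "(1 - fps_X^(2*(Suc n - Suc i))) * gb (Suc n) (Suc i)
           = (1 - fps_X^(2*(n - i))) * gb n i + fps_X^(2*Suc i) * gb n (Suc i) - fps_X^(2*(n - i)) * fps_X^(2*Suc i) * gb n (Suc i)"
        by (simp add: algebra_simps)
      also have "\<dots> = (1 - fps_X^(2*Suc n)) * gb n (Suc i)"
        unfolding I2[symmetric] e2 by (simp add: algebra_simps)
      finally show ?thesis using L Suc by simp
    qed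
  qed
qed

lemma gb_P2: "gb (Suc n) (Suc j) = fps_X^(2*(n-j)) * gb n j + gb n (Suc j)"
proof -
  have nz: "(1 - fps_X^(2*Suc j) :: int fps) \<noteq> 0"
  proof
    assume "(1 - fps_X^(2*Suc j) :: int fps) = 0"
    then have "(1 - fps_X^(2*Suc j) :: int fps) $ 0 = 0" by simp
    then show False by simp
  qed
  have "(1 - fps_X^(2*Suc j)) * gb (Suc n) (Suc j) = (1 - fps_X^(2*Suc j)) * (fps_X^(2*(n-j)) * gb n j + gb n (Suc j))"
  proof -
    have "(1 - fps_X^(2*Suc j)) * gb (Suc n) (Suc j) - (1 - fps_X^(2*Suc j)) * (fps_X^(2*(n-j)) * gb n j + gb n (Suc j))
        = (1 - fps_X^(2*Suc j)) * ((1 - fps_X^(2*(n-j))) * gb n j - (1 - fps_X^(2*Suc j)) * gb n (Suc j))"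
      by (simp add: algebra_simps)
    also have "\<dots> = 0" using gb_ratio[of j n] by simp
    finally show ?thesis by simp
  qed
  then show ?thesis using nz by simp
qed


lemma gb_P1': "gb (Suc n) (Suc j) = gb n j + fps_X^(2*Suc j) * gb n (Suc j)"
  by simp

lemma gb3: "gb (Suc (Suc n)) (Suc j) = (1 + fps_X^(2*Suc n)) * gb n j
   + (if j = 0 then 0 else fps_X^(2*(Suc n - j)) * gb n (j - 1)) + fps_X^(2*Suc j) * gb n (Suc j)"
proof (cases j)
  case 0
  have "gb (Suc (Suc n)) (Suc 0) = 1 + fps_X^2 * gb (Suc n) 1" by simp
  also have "gb (Suc n) 1 = fps_X^(2*n) + gb n 1" using gb_P2[of n 0] by simp
  finally show ?thesis using 0 by (simp add: algebra_simps power_add[symmetric] power2_eq_square)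
next
  case (Suc i)
  have a: "gb (Suc (Suc n)) (Suc j) = gb (Suc n) j + fps_X^(2*Suc j) * gb (Suc n) (Suc j)" by simp
  have b: "gb (Suc n) j = fps_X^(2*(n-i)) * gb n i + gb n j" using gb_P2[of n i] Suc by simp
  have c: "gb (Suc n) (Suc j) = fps_X^(2*(n-j)) * gb n j + gb n (Suc j)" using gb_P2[of n j] by simp
  have d: "fps_X^(2*Suc j) * (fps_X^(2*(n-j)) * gb n j) = fps_X^(2*Suc n) * gb n j"
  proof (cases "j \<le> n")
    case True
    have "2*Suc j + 2*(n-j) = 2*Suc n" using True by simp
    then show ?thesis by (metis power_add mult.assoc)
  next
    case False then show ?thesis by (simp add: gb_zero)
  qed
  show ?thesis unfolding a b c using Suc d by (simp add: algebra_simps)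
qed

fun V :: "nat \<Rightarrow> int fps poly" where
  "V 0 = [:2:]"
| "V (Suc 0) = [:0, 1:]"
| "V (Suc (Suc n)) = pCons 0 (V (Suc n)) - V n"

definition W :: "int \<Rightarrow> int fps poly" where
  "W k = V (nat \<bar>k\<bar>)"

lemma x_mult: "[:0, 1:] * (p::int fps poly) = pCons 0 p"
  by simp

lemma W_rec: "[:0, 1:] * W k = W (k + 1) + W (k - 1)"
proof -
  consider "k = 0" | "k \<ge> 1" | "k \<le> -1" by linarith
  then show ?thesis
  proof cases
    case 1 then show ?thesis by (simp add: W_def)
  next
    case 2
    then obtain n where n: "nat \<bar>k\<bar> = Suc n" "nat \<bar>k+1\<bar> = Suc (Suc n)" "nat \<bar>k-1\<bar> = n"
      by (intro that[of "nat (k - 1)"]) auto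
    show ?thesis unfolding W_def n by simp
  next
    case 3
    then obtain n where n: "nat \<bar>k\<bar> = Suc n" "nat \<bar>k-1\<bar> = Suc (Suc n)" "nat \<bar>k+1\<bar> = n"
      by (intro that[of "nat (- k - 1)"]) auto
    show ?thesis unfolding W_def n by simp
  qed
qed

lemma V_const: "coeff (V n) t = fps_const (coeff (V n) t $ 0)"
proof (induction n arbitrary: t rule: V.induct)
  case 1 then show ?case by (cases t) (auto simp: numeral_fps_const)
next
  case 2 then show ?case by (cases t) (auto simp: coeff_pCons')
next
  case (3 n)
  show ?case
  proof (cases t)
    case 0 then show ?thesis using "3.IH"(2)[of 0] by (simp add: fps_const_neg[symmetric] fps_const_add)
  next
    case (Suc t')
    have "coeff (V (Suc (Suc n))) t = coeff (V (Suc n)) t' - coeff (V n) t" using Suc by simp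
    also have "\<dots> = fps_const (coeff (V (Suc n)) t' $ 0) - fps_const (coeff (V n) t $ 0)"
      using "3.IH"(1)[of t'] "3.IH"(2)[of t] by simp
    finally show ?thesis using Suc by (simp add: fps_const_sub)
  qed
qed

lemma V_even: "even (coeff (V n) 0 $ 0)"
  by (induction n rule: V.induct) auto

lemma V0_even: "even (coeff (V 0) t $ 0)"
  by (cases t) auto

definition gam :: "nat \<Rightarrow> int \<Rightarrow> int fps" where
  "gam L k = (if - int L \<le> k \<and> k \<le> int L then fps_X^(nat (k*k)) * gb (2*L) (nat (int L + k)) else 0)"

lemma gam_eq: "- int L \<le> k \<Longrightarrow> gam L k = fps_X^(nat (k*k)) * gb (2*L) (nat (int L + k))"
  by (auto simp: gam_def gb_zero)


lemma gam_rec: "gam (Suc L) k = (1 + fps_X^(2*(2*L+1))) * gam L k + fps_X^(2*L+1) * (gam L (k-1) + gam L (k+1))"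
proof -
  consider "k < - int L - 1 \<or> k > int L + 1" | "k = - int L - 1" | "- int L \<le> k \<and> k \<le> int L + 1" by linarith
  then show ?thesis
  proof cases
    case 1 then show ?thesis by (auto simp: gam_def)
  next
    case 2
    have l: "gam (Suc L) k = fps_X^(nat (k*k))" using 2 by (simp add: gam_def)
    have r: "gam L (k+1) = fps_X^(L*L)" using 2 by (simp add: gam_def nat_mult_distrib)
    have "nat (k*k) = 2*L+1 + L*L"
    proof -
      have "k*k = int (2*L+1 + L*L)" using 2 by (simp add: algebra_simps; algebra)
      then show ?thesis by (metis nat_int)
    qed
    then show ?thesis using 2 l r by (simp add: gam_def power_add)
  next
    case 3
    define j where "j = nat (int L + k)"
    have kj: "k = int j - int L" using 3 j_def by simp
    have jle: "j \<le> 2*L+1" using 3 j_def by linarith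
    have l: "gam (Suc L) k = fps_X^(nat (k*k)) * gb (Suc (Suc (2*L))) (Suc j)"
    proof -
      have s1: "nat (int (Suc L) + k) = Suc j" using 3 unfolding j_def by arith
      have s2: "2 * Suc L = Suc (Suc (2*L))" by simp
      show ?thesis unfolding gam_def s1 s2 using 3 by (simp del: gb.simps)
    qed
    have m: "gam L k = fps_X^(nat (k*k)) * gb (2*L) j" using 3 gam_eq[of L k] j_def by simp
    have p: "gam L (k+1) = fps_X^(nat ((k+1)*(k+1))) * gb (2*L) (Suc j)"
    proof -
      have s1: "nat (int L + (k + 1)) = Suc j" using 3 unfolding j_def by arith
      show ?thesis using 3 gam_eq[of L "k+1"] s1 by (simp del: gb.simps)
    qed
    have e2: "nat (k*k) + 2*Suc j = 2*L+1 + nat ((k+1)*(k+1))"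
    proof -
      define a where "a = k*k"
      define b where "b = (k+1)*(k+1)"
      have A: "int (nat a) = a" unfolding a_def by simp
      have B: "int (nat b) = b" unfolding b_def by simp
      have E: "a + 2*(int j + 1) = 2*int L + 1 + b" unfolding a_def b_def using kj by algebra
      have I1: "int (nat a + 2*Suc j) = a + 2*(int j + 1)" using A by simp
      have I2: "int (2*L+1 + nat b) = 2*int L + 1 + b" using B by simp
      have "nat a + 2*Suc j = 2*L+1 + nat b" using I1 I2 E by (metis of_nat_eq_iff)
      then show ?thesis unfolding a_def b_def .
    qed
    have P: "fps_X^(2*L+1) * gam L (k+1) = fps_X^(nat (k*k)) * (fps_X^(2*Suc j) * gb (2*L) (Suc j))"
    proof -
      have "fps_X^(2*L+1) * gam L (k+1) = fps_X^(2*L+1 + nat ((k+1)*(k+1))) * gb (2*L) (Suc j)"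
        unfolding p by (simp only: power_add mult.assoc)
      also have "\<dots> = fps_X^(nat (k*k) + 2*Suc j) * gb (2*L) (Suc j)" by (simp only: e2)
      finally show ?thesis by (simp only: power_add mult.assoc)
    qed
    have M: "fps_X^(2*L+1) * gam L (k-1) = fps_X^(nat (k*k)) * (if j = 0 then 0 else fps_X^(2*(Suc (2*L) - j)) * gb (2*L) (j - 1))"
    proof (cases "j = 0")
      case True
      then have "k - 1 < - int L" using kj by simp
      then show ?thesis using True by (simp add: gam_def)
    next
      case False
      have q: "gam L (k-1) = fps_X^(nat ((k-1)*(k-1))) * gb (2*L) (j - 1)"
        using False gam_eq[of L "k-1"] kj by (simp add: nat_diff_distrib)
      have e1: "nat (k*k) + 2*(Suc (2*L) - j) = 2*L+1 + nat ((k-1)*(k-1))"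
      proof -
        define a where "a = k*k"
        define b where "b = (k-1)*(k-1)"
        have A: "int (nat a) = a" unfolding a_def by simp
        have B: "int (nat b) = b" unfolding b_def by simp
        have E: "a + 2*(2*int L + 1 - int j) = 2*int L + 1 + b" unfolding a_def b_def using kj by algebra
        have I1: "int (nat a + 2*(Suc (2*L) - j)) = a + 2*(2*int L + 1 - int j)" using A jle by (simp add: of_nat_diff)
        have I2: "int (2*L+1 + nat b) = 2*int L + 1 + b" using B by simp
        have "nat a + 2*(Suc (2*L) - j) = 2*L+1 + nat b" using I1 I2 E by (metis of_nat_eq_iff)
        then show ?thesis unfolding a_def b_def .
      qed
      have "fps_X^(2*L+1) * gam L (k-1) = fps_X^(2*L+1 + nat ((k-1)*(k-1))) * gb (2*L) (j - 1)"
        unfolding q by (simp only: power_add mult.assoc)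
      also have "\<dots> = fps_X^(nat (k*k) + 2*(Suc (2*L) - j)) * gb (2*L) (j - 1)" by (simp only: e1)
      finally show ?thesis using False by (simp only: power_add mult.assoc if_False)
    qed
    have "gam (Suc L) k = fps_X^(nat (k*k)) * ((1 + fps_X^(2*Suc (2*L))) * gb (2*L) j
       + (if j = 0 then 0 else fps_X^(2*(Suc (2*L) - j)) * gb (2*L) (j - 1)) + fps_X^(2*Suc j) * gb (2*L) (Suc j))"
      unfolding l gb3 ..
    also have "\<dots> = (1 + fps_X^(2*(2*L+1))) * gam L k + fps_X^(2*L+1) * (gam L (k-1) + gam L (k+1))"
      unfolding distrib_left M P m by (simp add: algebra_simps)
    finally show ?thesis .
  qed
qed


lemma sum_shift_up:
  fixes g :: "int \<Rightarrow> 'a::comm_monoid_add"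
  assumes "g (-M) = 0" "g (M+1) = 0"
  shows "(\<Sum>k\<in>{-M..M}. g (k+1)) = (\<Sum>k\<in>{-M..M}. g k)"
proof -
  have "(\<Sum>k\<in>{-M..M}. g (k+1)) = (\<Sum>k\<in>(\<lambda>k. k+1)`{-M..M}. g k)"
    by (subst sum.reindex) (auto simp: inj_on_def)
  also have "(\<lambda>k. k+1)`{-M..M} = {-M+1..M+1}" by simp
  also have "(\<Sum>k\<in>{-M+1..M+1}. g k) = (\<Sum>k\<in>{-M+1..M}. g k)"
  proof (rule sum.mono_neutral_right)
    show "\<forall>i\<in>{-M+1..M+1} - {-M+1..M}. g i = 0"
    proof
      fix i assume "i \<in> {-M+1..M+1} - {-M+1..M}"
      then have "i = M+1" by auto
      then show "g i = 0" by (simp add: assms)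
    qed
  qed auto
  also have "\<dots> = (\<Sum>k\<in>{-M..M}. g k)"
  proof (rule sum.mono_neutral_left)
    show "\<forall>i\<in>{-M..M} - {-M+1..M}. g i = 0"
    proof
      fix i assume "i \<in> {-M..M} - {-M+1..M}"
      then have "i = -M" by auto
      then show "g i = 0" by (simp add: assms)
    qed
  qed auto
  finally show ?thesis .
qed

lemma sum_shift_down:
  fixes g :: "int \<Rightarrow> 'a::comm_monoid_add"
  assumes "g (-M-1) = 0" "g M = 0"
  shows "(\<Sum>k\<in>{-M..M}. g (k-1)) = (\<Sum>k\<in>{-M..M}. g k)"
  using sum_shift_up[of "\<lambda>k. g (k - 1)" M] assms by simp

definition Np :: "nat \<Rightarrow> int fps poly" where
  "Np L = (\<Prod>i<L. [:1 + fps_X^(2*(2*i+1)), fps_X^(2*i+1):])"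

lemma mult_lin: "(p::int fps poly) * [:a, b:] = smult a p + smult b ([:0,1:] * p)"
  by (simp add: x_mult)

lemma gam_out: "int L < \<bar>k\<bar> \<Longrightarrow> gam L k = 0"
  by (auto simp: gam_def)

lemma jtp: "int L + 2 \<le> M \<Longrightarrow> smult 2 (Np L) = (\<Sum>k\<in>{-M..M}. smult (gam L k) (W k))"
proof (induction L)
  case 0
  have "(\<Sum>k\<in>{-M..M}. smult (gam 0 k) (W k)) = (\<Sum>k\<in>{-M..M}. if k = 0 then W 0 else 0)"
    by (rule sum.cong) (auto simp: gam_def)
  also have "\<dots> = W 0" using 0 by (simp add: sum.delta)
  finally show ?case by (simp add: Np_def W_def)
next
  case (Suc L)
  define a :: "int fps" where "a = 1 + fps_X^(2*(2*L+1))"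
  define b :: "int fps" where "b = fps_X^(2*L+1)"
  have IH: "smult 2 (Np L) = (\<Sum>k\<in>{-M..M}. smult (gam L k) (W k))" using Suc by simp
  have "Np (Suc L) = Np L * [:a, b:]"
    by (simp add: Np_def a_def b_def del: mult_pCons_right)
  then have "smult 2 (Np (Suc L)) = smult 2 (Np L) * [:a, b:]"
    by (simp only: mult_smult_left)
  also have "\<dots> = (\<Sum>k\<in>{-M..M}. smult (gam L k) (W k) * [:a, b:])"
    unfolding IH by (simp add: sum_distrib_right del: mult_pCons_right)
  also have "\<dots> = (\<Sum>k\<in>{-M..M}. smult (a * gam L k) (W k) + smult (b * gam L k) (W (k+1)) + smult (b * gam L k) (W (k-1)))"
  proof (rule sum.cong)
    fix k
    have "W k * [:a, b:] = smult a (W k) + smult b (W (k+1) + W (k-1))"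
      by (simp only: mult_lin W_rec)
    then show "smult (gam L k) (W k) * [:a, b:] = smult (a * gam L k) (W k) + smult (b * gam L k) (W (k+1)) + smult (b * gam L k) (W (k-1))"
      by (simp only: mult_smult_left smult_add_right smult_smult mult.commute[of "gam L k"] add.assoc)
  qed simp
  also have "\<dots> = (\<Sum>k\<in>{-M..M}. smult (a * gam L k) (W k)) + (\<Sum>k\<in>{-M..M}. smult (b * gam L k) (W (k+1)))
       + (\<Sum>k\<in>{-M..M}. smult (b * gam L k) (W (k-1)))"
    by (simp add: sum.distrib)
  also have "(\<Sum>k\<in>{-M..M}. smult (b * gam L k) (W (k+1))) = (\<Sum>k\<in>{-M..M}. smult (b * gam L (k-1)) (W k))"
    using sum_shift_up[of "\<lambda>k. smult (b * gam L (k-1)) (W k)" M] Suc.prems by (simp add: gam_out)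
  also have "(\<Sum>k\<in>{-M..M}. smult (b * gam L k) (W (k-1))) = (\<Sum>k\<in>{-M..M}. smult (b * gam L (k+1)) (W k))"
    using sum_shift_down[of "\<lambda>k. smult (b * gam L (k+1)) (W k)" M] Suc.prems by (simp add: gam_out)
  also have "(\<Sum>k\<in>{-M..M}. smult (a * gam L k) (W k)) + (\<Sum>k\<in>{-M..M}. smult (b * gam L (k-1)) (W k))
       + (\<Sum>k\<in>{-M..M}. smult (b * gam L (k+1)) (W k)) = (\<Sum>k\<in>{-M..M}. smult (gam (Suc L) k) (W k))"
    unfolding sum.distrib[symmetric] by (rule sum.cong) (simp_all add: gam_rec a_def b_def smult_add_left[symmetric] algebra_simps)
  finally show ?case .
qed


definition small :: "nat \<Rightarrow> int fps \<Rightarrow> bool" where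
  "small M f \<longleftrightarrow> (\<forall>i<M. f $ i = 0)"

lemma small_0 [simp]: "small M 0" by (simp add: small_def)
lemma small_add: "small M f \<Longrightarrow> small M g \<Longrightarrow> small M (f + g)" by (simp add: small_def)
lemma small_diff: "small M f \<Longrightarrow> small M g \<Longrightarrow> small M (f - g)" by (simp add: small_def)
lemma small_mono: "small M f \<Longrightarrow> N \<le> M \<Longrightarrow> small N f" by (simp add: small_def)
lemma small_mult_left: "small M f \<Longrightarrow> small M (g * f)"
  unfolding small_def fps_mult_nth by (auto intro!: sum.neutral)
lemma small_mult_right: "small M f \<Longrightarrow> small M (f * g)"
  using small_mult_left[of M f g] by (simp add: mult.commute)
lemma small_X: "small a (fps_X^a * h)"
  by (simp add: small_def fps_X_power_mult_nth)
lemma small_X_mult: "small a f \<Longrightarrow> small (a + b) (fps_X^b * f)"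
  by (simp add: small_def fps_X_power_mult_nth)
lemma small_sum: "(\<And>x. x \<in> A \<Longrightarrow> small M (f x)) \<Longrightarrow> small M (\<Sum>x\<in>A. f x)"
  by (simp add: small_def fps_sum_nth)

lemma gb_diff: "gb n j - gb n (Suc j) = fps_X^(2*(n-j)) * gb n j - fps_X^(2*Suc j) * gb n (Suc j)"
proof -
  have "gb (Suc n) (Suc j) = gb n j + fps_X^(2*Suc j) * gb n (Suc j)" by simp
  moreover have "gb (Suc n) (Suc j) = fps_X^(2*(n-j)) * gb n j + gb n (Suc j)" by (rule gb_P2)
  ultimately show ?thesis by (simp add: algebra_simps)
qed

lemma small_gb_diff: "small (2 * min (n-j) (Suc j)) (gb n j - gb n (Suc j))"
  unfolding gb_diff
proof (rule small_diff)
  show "small (2 * min (n - j) (Suc j)) (fps_X ^ (2 * (n - j)) * gb n j)"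
    by (rule small_mono[OF small_X]) simp
  show "small (2 * min (n - j) (Suc j)) (fps_X ^ (2 * Suc j) * gb n (Suc j))"
    by (rule small_mono[OF small_X]) (auto simp: min_def)
qed

lemma gb_pos: "i \<le> L \<Longrightarrow> small (2*(L-i)+2) (gb (2*L) (L+i) - gb (2*L) L)"
proof (induction i)
  case 0 then show ?case by simp
next
  case (Suc i)
  have a: "small (2*(L-i)) (gb (2*L) (L+i) - gb (2*L) (L + Suc i))"
    using small_gb_diff[of "2*L" "L+i"] Suc.prems by (rule_tac small_mono) auto
  have b: "small (2*(L-i)) (gb (2*L) (L+i) - gb (2*L) L)"
    using Suc by (rule_tac small_mono) auto
  have "small (2*(L-i)) ((gb (2*L) (L+i) - gb (2*L) L) - (gb (2*L) (L+i) - gb (2*L) (L + Suc i)))"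
    using a b by (rule_tac small_diff)
  then show ?case using Suc.prems by (simp add: Suc_diff_Suc[symmetric])
qed

lemma gb_neg: "i \<le> L \<Longrightarrow> small (2*(L-i)+2) (gb (2*L) (L-i) - gb (2*L) L)"
proof (induction i)
  case 0 then show ?case by simp
next
  case (Suc i)
  have a: "small (2*(L-i)) (gb (2*L) (L - Suc i) - gb (2*L) (Suc (L - Suc i)))"
    using small_gb_diff[of "2*L" "L - Suc i"] Suc.prems by (rule_tac small_mono) auto
  have b: "small (2*(L-i)) (gb (2*L) (L-i) - gb (2*L) L)"
    using Suc by (rule_tac small_mono) auto
  have e: "Suc (L - Suc i) = L - i" using Suc.prems by simp
  have "small (2*(L-i)) ((gb (2*L) (L - Suc i) - gb (2*L) (Suc (L - Suc i))) + (gb (2*L) (L-i) - gb (2*L) L))"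
    using a b by (rule_tac small_add)
  then show ?case using Suc.prems unfolding e by (simp add: Suc_diff_Suc[symmetric])
qed

lemma sq_bound: "(i::nat) \<le> L \<Longrightarrow> 2*L+1 \<le> i*i + (2*(L-i)+2)"
proof -
  assume iL: "i \<le> L"
  have h1: "2*(L-i) + 2*i = 2*L" using iL by simp
  have h2: "2*i \<le> i*i + 1" by (cases i) auto
  show ?thesis using h1 h2 by linarith
qed

lemma gam_diff: "\<bar>k\<bar> \<le> int L \<Longrightarrow> small (2*L+1) (gam L k - fps_X^(nat (k*k)) * gb (2*L) L)"
proof -
  assume kL: "\<bar>k\<bar> \<le> int L"
  define i where "i = nat \<bar>k\<bar>"
  have iL: "i \<le> L" using kL i_def by simp
  have nk: "nat (k*k) = i*i" unfolding i_def by (simp add: nat_mult_distrib[symmetric] abs_mult_self_eq)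
  have "gam L k - fps_X^(nat (k*k)) * gb (2*L) L = fps_X^(i*i) * (gb (2*L) (nat (int L + k)) - gb (2*L) L)"
    using kL gam_eq[of L k] by (simp add: nk algebra_simps)
  moreover have "small (2*(L-i)+2) (gb (2*L) (nat (int L + k)) - gb (2*L) L)"
  proof (cases "k \<ge> 0")
    case True
    then have "nat (int L + k) = L + i" unfolding i_def by simp
    then show ?thesis using gb_pos[OF iL] by simp
  next
    case False
    then have "nat (int L + k) = L - i" unfolding i_def using kL by simp
    then show ?thesis using gb_neg[OF iL] by simp
  qed
  ultimately show ?thesis
  proof -
    assume eq: "gam L k - fps_X^(nat (k*k)) * gb (2*L) L = fps_X^(i*i) * (gb (2*L) (nat (int L + k)) - gb (2*L) L)"
      and sm: "small (2*(L-i)+2) (gb (2*L) (nat (int L + k)) - gb (2*L) L)"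
    have "small (2*(L-i)+2 + i*i) (fps_X^(i*i) * (gb (2*L) (nat (int L + k)) - gb (2*L) L))"
      by (rule small_X_mult[OF sm])
    then show ?thesis unfolding eq
      by (rule small_mono) (use sq_bound[OF iL] in simp)
  qed
qed


lemma coeff_lin_mult: "coeff ([:1, c:] * (p::int fps poly)) t = coeff p t + (if t = 0 then 0 else c * coeff p (t - 1))"
  by (cases t) auto

lemma coeff_prod_lin:
  fixes g :: "'a \<Rightarrow> int fps"
  assumes "finite A"
  shows "coeff (\<Prod>a\<in>A. [:1, g a:]) t = (\<Sum>S\<in>{S. S \<subseteq> A \<and> card S = t}. \<Prod>a\<in>S. g a)"
  using assms
proof (induction A arbitrary: t rule: finite_induct)
  case empty
  have e: "{S. S \<subseteq> {} \<and> card S = t} = (if t = 0 then {{}} else {})" by auto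
  show ?case unfolding e by (cases "t = 0") simp_all
next
  case (insert a A)
  have fin: "finite {S. S \<subseteq> A \<and> card S = u}" for u using insert.hyps(1) by auto
  have split: "{S. S \<subseteq> insert a A \<and> card S = t} = {S. S \<subseteq> A \<and> card S = t} \<union> {S. S \<subseteq> insert a A \<and> a \<in> S \<and> card S = t}"
    by auto
  have disj: "{S. S \<subseteq> A \<and> card S = t} \<inter> {S. S \<subseteq> insert a A \<and> a \<in> S \<and> card S = t} = {}"
    using insert.hyps(2) by auto
  have fin2: "finite {S. S \<subseteq> insert a A \<and> a \<in> S \<and> card S = t}"
    using insert.hyps(1) by (rule_tac finite_subset[of _ "Pow (insert a A)"]) auto
  have second: "(\<Sum>S\<in>{S. S \<subseteq> insert a A \<and> a \<in> S \<and> card S = t}. \<Prod>x\<in>S. g x)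
      = (if t = 0 then 0 else g a * (\<Sum>S\<in>{S. S \<subseteq> A \<and> card S = t - 1}. \<Prod>x\<in>S. g x))"
  proof (cases t)
    case 0
    have e0: "{S. S \<subseteq> insert a A \<and> a \<in> S \<and> card S = t} = {}"
      using 0 insert.hyps(1) by (auto dest: finite_subset simp: card_gt_0_iff)
    show ?thesis unfolding e0 using 0 by simp
  next
    case (Suc u)
    have img: "{S. S \<subseteq> insert a A \<and> a \<in> S \<and> card S = t} = insert a ` {S. S \<subseteq> A \<and> card S = u}"
    proof (intro equalityI subsetI)
      fix S assume S: "S \<in> {S. S \<subseteq> insert a A \<and> a \<in> S \<and> card S = t}"
      then have fS: "finite S" using insert.hyps(1) by (auto dest: finite_subset)
      have "S - {a} \<in> {S. S \<subseteq> A \<and> card S = u}" using S fS Suc by auto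
      moreover have "S = insert a (S - {a})" using S by auto
      ultimately show "S \<in> insert a ` {S. S \<subseteq> A \<and> card S = u}" by blast
    next
      fix S assume "S \<in> insert a ` {S. S \<subseteq> A \<and> card S = u}"
      then obtain T where T: "T \<subseteq> A" "card T = u" "S = insert a T" by auto
      have "finite T" using T insert.hyps(1) by (auto dest: finite_subset)
      moreover have "a \<notin> T" using T insert.hyps(2) by auto
      ultimately show "S \<in> {S. S \<subseteq> insert a A \<and> a \<in> S \<and> card S = t}" using T Suc by auto
    qed
    have inj: "inj_on (insert a) {S. S \<subseteq> A \<and> card S = u}"
      using insert.hyps(2) unfolding inj_on_def by (metis Diff_insert_absorb mem_Collect_eq subsetD)
    have "(\<Sum>S\<in>{S. S \<subseteq> insert a A \<and> a \<in> S \<and> card S = t}. \<Prod>x\<in>S. g x)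
        = (\<Sum>S\<in>{S. S \<subseteq> A \<and> card S = u}. \<Prod>x\<in>insert a S. g x)"
      unfolding img by (simp add: sum.reindex[OF inj])
    also have "\<dots> = (\<Sum>S\<in>{S. S \<subseteq> A \<and> card S = u}. g a * (\<Prod>x\<in>S. g x))"
    proof (rule sum.cong)
      fix S assume "S \<in> {S. S \<subseteq> A \<and> card S = u}"
      then have "finite S" "a \<notin> S" using insert.hyps by (auto dest: finite_subset)
      then show "(\<Prod>x\<in>insert a S. g x) = g a * (\<Prod>x\<in>S. g x)" by simp
    qed simp
    finally show ?thesis using Suc by (simp add: sum_distrib_left)
  qed
  have "coeff (\<Prod>x\<in>insert a A. [:1, g x:]) t = coeff ([:1, g a:] * (\<Prod>x\<in>A. [:1, g x:])) t"
    using insert.hyps by simp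
  also have "\<dots> = (\<Sum>S\<in>{S. S \<subseteq> A \<and> card S = t}. \<Prod>x\<in>S. g x)
       + (if t = 0 then 0 else g a * (\<Sum>S\<in>{S. S \<subseteq> A \<and> card S = t - 1}. \<Prod>x\<in>S. g x))"
    unfolding coeff_lin_mult insert.IH ..
  also have "\<dots> = (\<Sum>S\<in>{S. S \<subseteq> insert a A \<and> card S = t}. \<Prod>x\<in>S. g x)"
    unfolding split second[symmetric] by (rule sum.union_disjoint[symmetric]) (use fin fin2 disj in auto)
  finally show ?case .
qed


lemma fm_mult: "0 < m \<Longrightarrow> modd_factor 0 m * (1 + fps_X^(2*m)) = fps_X^m"
proof -
  assume m: "0 < m"
  define d :: "int fps" where "d = 1 + fps_const 0 * fps_X^m + fps_X^(2*m)"
  have d: "d = 1 + fps_X^(2*m)" by (simp add: d_def)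
  have "d $ 0 * 1 = 1" using m by (simp add: d)
  then have inv: "d * fps_right_inverse d 1 = 1" by (rule fps_right_inverse)
  have "modd_factor 0 m * (1 + fps_X^(2*m)) = fps_X^m * (d * fps_right_inverse d 1)"
    unfolding modd_factor_def d_def[symmetric] d by (simp add: algebra_simps)
  then show ?thesis using inv by simp
qed

lemma Np_eq: "Np L = smult (\<Prod>i<L. 1 + fps_X^(2*(2*i+1))) (\<Prod>i<L. [:1, modd_factor 0 (2*i+1):])"
  unfolding Np_def prod_smult[symmetric]
proof (rule prod.cong)
  fix i
  have "(1 + fps_X^(2*(2*i+1))) * modd_factor 0 (2*i+1) = fps_X^(2*i+1)"
    using fm_mult[of "2*i+1"] by (simp add: mult.commute)
  then show "[:1 + fps_X ^ (2 * (2 * i + 1)), fps_X ^ (2 * i + 1):] = smult (1 + fps_X ^ (2 * (2 * i + 1))) [:1, modd_factor 0 (2 * i + 1):]"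
    by simp
qed simp

lemma m_odd_eq: "odd n \<Longrightarrow> m_odd 0 t n = coeff (\<Prod>i<(n+1) div 2. [:1, modd_factor 0 (2*i+1):]) t $ n"
proof -
  assume n: "odd n"
  have A: "{k. odd k \<and> k \<le> n} = (\<lambda>i. 2*i+1) ` {..<(n+1) div 2}"
  proof (intro equalityI subsetI)
    fix k assume "k \<in> {k. odd k \<and> k \<le> n}"
    then have "odd k" "k \<le> n" by auto
    then have "k = 2*(k div 2) + 1" "k div 2 < (n+1) div 2" using n by (auto elim!: oddE)
    then show "k \<in> (\<lambda>i. 2*i+1) ` {..<(n+1) div 2}" by blast
  next
    fix k assume "k \<in> (\<lambda>i. 2*i+1) ` {..<(n+1) div 2}"
    then show "k \<in> {k. odd k \<and> k \<le> n}" using n by (auto elim!: oddE)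
  qed
  have fin: "finite {k. odd k \<and> k \<le> n}" by auto
  have "m_odd 0 t n = coeff (\<Prod>m\<in>{k. odd k \<and> k \<le> n}. [:1, modd_factor 0 m:]) t $ n"
    unfolding m_odd_def coeff_prod_lin[OF fin] ..
  also have "(\<Prod>m\<in>{k. odd k \<and> k \<le> n}. [:1, modd_factor 0 m:]) = (\<Prod>i<(n+1) div 2. [:1, modd_factor 0 (2*i+1):])"
    unfolding A by (subst prod.reindex) (auto simp: inj_on_def)
  finally show ?thesis .
qed

lemma D0: "(\<Prod>i<L. 1 + fps_X^(2*(2*i+1)) :: int fps) $ 0 = 1"
  by (induction L) auto

lemma cancel2D:
  assumes "small M (2 * D * h)" "D $ 0 = (1::int)"
  shows "small M h"
proof -
  have inv: "D * fps_right_inverse D 1 = 1" by (rule fps_right_inverse) (simp add: assms)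
  have "small M (fps_right_inverse D 1 * (2 * D * h))" by (rule small_mult_left[OF assms(1)])
  also have "fps_right_inverse D 1 * (2 * D * h) = fps_const 2 * h"
    using inv by (simp add: numeral_fps_const algebra_simps)
  finally show ?thesis by (simp add: small_def)
qed

definition hk :: "nat \<Rightarrow> int \<Rightarrow> int fps" where
  "hk L k = (if \<bar>k\<bar> \<le> int L then fps_X^(nat (k*k)) else 0)"

definition Gc :: "nat \<Rightarrow> nat \<Rightarrow> int fps" where
  "Gc L t = (\<Sum>k\<in>{-(int L+2)..int L+2}. hk L k * coeff (W k) t)"

lemma key:
  "small (2*L+1) (coeff (\<Prod>i<L. [:1, modd_factor 0 (2*i+1):]) t * Gc L 0 - Gc L t)"
proof -
  define P where "P = (\<Prod>i<L. [:1, modd_factor 0 (2*i+1):])"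
  define D :: "int fps" where "D = (\<Prod>i<L. 1 + fps_X^(2*(2*i+1)))"
  define C where "C = gb (2*L) L"
  define M where "M = int L + 2"
  define Ec where "Ec u = (\<Sum>k\<in>{-M..M}. (gam L k - C * hk L k) * coeff (W k) u)" for u
  have J: "smult 2 (smult D P) = (\<Sum>k\<in>{-M..M}. smult (gam L k) (W k))"
    using jtp[of L M] Np_eq[of L] unfolding P_def D_def M_def by simp
  have eq: "2 * D * coeff P u = C * Gc L u + Ec u" for u
  proof -
    have "2 * D * coeff P u = coeff (smult 2 (smult D P)) u" by simp
    also have "\<dots> = (\<Sum>k\<in>{-M..M}. gam L k * coeff (W k) u)" unfolding J coeff_sum by simp
    also have "\<dots> = (\<Sum>k\<in>{-M..M}. C * (hk L k * coeff (W k) u) + (gam L k - C * hk L k) * coeff (W k) u)"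
      by (rule sum.cong) (simp_all add: algebra_simps)
    also have "\<dots> = C * Gc L u + Ec u"
      unfolding sum.distrib Gc_def Ec_def M_def sum_distrib_left ..
    finally show ?thesis .
  qed
  have smallE: "small (2*L+1) (Ec u)" for u
    unfolding Ec_def
  proof (rule small_sum)
    fix k
    show "small (2*L+1) ((gam L k - C * hk L k) * coeff (W k) u)"
    proof (rule small_mult_right)
      show "small (2*L+1) (gam L k - C * hk L k)"
      proof (cases "\<bar>k\<bar> \<le> int L")
        case True
        then show ?thesis using gam_diff[OF True] by (simp add: hk_def C_def mult.commute)
      next
        case False
        then show ?thesis by (simp add: hk_def gam_out)
      qed
    qed
  qed
  have P0: "coeff P 0 = 1"
  proof -
    have e: "{S. S \<subseteq> {..<L} \<and> card S = 0} = {{}}" by (auto dest: finite_subset)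
    show ?thesis unfolding P_def coeff_prod_lin[OF finite_lessThan] e by simp
  qed
  have eq0: "2 * D = C * Gc L 0 + Ec 0" using eq[of 0] P0 by simp
  have "2 * D * (coeff P t * Gc L 0 - Gc L t) = (2 * D * coeff P t) * Gc L 0 - (2 * D) * Gc L t"
    by (simp add: algebra_simps)
  also have "\<dots> = Ec t * Gc L 0 - Ec 0 * Gc L t"
    by (subst eq, subst eq0, simp add: algebra_simps)
  finally have "small (2*L+1) (2 * D * (coeff P t * Gc L 0 - Gc L t))"
    using smallE by (simp add: small_diff small_mult_right)
  then have "small (2*L+1) (coeff P t * Gc L 0 - Gc L t)"
    by (rule cancel2D) (unfold D_def, rule D0)
  then show ?thesis unfolding P_def .
qed


definition is_sq :: "nat \<Rightarrow> bool" where "is_sq i \<longleftrightarrow> (\<exists>s. i = s*s)"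

lemma sum_pair:
  fixes f :: "int \<Rightarrow> 'a::comm_monoid_add"
  shows "(\<Sum>k\<in>{-int N..int N}. f k) = f 0 + (\<Sum>s\<in>{1..N}. f (int s) + f (- int s))"
proof (induction N)
  case 0 then show ?case by simp
next
  case (Suc N)
  have e: "{-int (Suc N)..int (Suc N)} = {-int N..int N} \<union> {int (Suc N), - int (Suc N)}" by auto
  have "(\<Sum>k\<in>{-int (Suc N)..int (Suc N)}. f k) = (\<Sum>k\<in>{-int N..int N}. f k) + (\<Sum>k\<in>{int (Suc N), - int (Suc N)}. f k)"
    unfolding e by (rule sum.union_disjoint) auto
  also have "(\<Sum>k\<in>{int (Suc N), - int (Suc N)}. f k) = f (int (Suc N)) + f (- int (Suc N))" by simp
  finally show ?case using Suc by (simp add: add.assoc)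
qed

definition cc :: "int \<Rightarrow> nat \<Rightarrow> int" where "cc k t = coeff (V (nat \<bar>k\<bar>)) t $ 0"

lemma Gc_nth: "Gc L t $ i = (\<Sum>k\<in>{-(int L+2)..int L+2}. if \<bar>k\<bar> \<le> int L \<and> i = nat (k*k) then cc k t else 0)"
proof -
  have "Gc L t $ i = (\<Sum>k\<in>{-(int L+2)..int L+2}. (hk L k * coeff (W k) t) $ i)"
    unfolding Gc_def fps_sum_nth ..
  also have "\<dots> = (\<Sum>k\<in>{-(int L+2)..int L+2}. if \<bar>k\<bar> \<le> int L \<and> i = nat (k*k) then cc k t else 0)"
  proof (rule sum.cong)
    fix k
    have c: "coeff (W k) t = fps_const (cc k t)" unfolding W_def cc_def by (rule V_const)
    show "(hk L k * coeff (W k) t) $ i = (if \<bar>k\<bar> \<le> int L \<and> i = nat (k*k) then cc k t else 0)"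
      unfolding c hk_def by (simp add: fps_X_power_mult_nth)
  qed simp
  finally show ?thesis .
qed

lemma Gc_nth_pair: "Gc L t $ i = (if i = 0 then cc 0 t else 0) + (\<Sum>s\<in>{1..L+2}. 2 * (if s \<le> L \<and> i = s*s then cc (int s) t else 0))"
proof -
  have "Gc L t $ i = (\<Sum>k\<in>{-int (L+2)..int (L+2)}. if \<bar>k\<bar> \<le> int L \<and> i = nat (k*k) then cc k t else 0)"
  proof -
    have iv: "{-(int L+2)..int L+2} = {-int (L+2)..int (L+2)}" by simp
    show ?thesis unfolding Gc_nth iv ..
  qed
  also have "\<dots> = (if i = 0 then cc 0 t else 0) + (\<Sum>s\<in>{1..L+2}. 2 * (if s \<le> L \<and> i = s*s then cc (int s) t else 0))"
    unfolding sum_pair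
  proof (intro arg_cong2[where f = "(+)"] sum.cong)
    fix s assume "s \<in> {1..L+2}"
    have n1: "nat (int s * int s) = s * s" by (simp add: nat_mult_distrib)
    have n2: "cc (- int s) t = cc (int s) t" by (simp add: cc_def)
    show "(if \<bar>int s\<bar> \<le> int L \<and> i = nat (int s * int s) then cc (int s) t else 0) +
          (if \<bar>- int s\<bar> \<le> int L \<and> i = nat (- int s * - int s) then cc (- int s) t else 0) =
          2 * (if s \<le> L \<and> i = s * s then cc (int s) t else 0)"
      using n1 n2 by simp
  qed simp_all
  finally show ?thesis .
qed

lemma Gc_sq: "\<not> is_sq i \<Longrightarrow> Gc L t $ i = 0"
  unfolding Gc_nth_pair is_sq_def by (auto intro!: sum.neutral)

lemma Gc_even: "even (Gc L t $ i)"
proof -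
  have "even (cc 0 t)" unfolding cc_def using V0_even by simp
  then show ?thesis unfolding Gc_nth_pair by (auto intro!: dvd_sum)
qed

lemma Gc00: "Gc L 0 $ 0 = 2"
  unfolding Gc_nth_pair by (auto simp: cc_def intro!: sum.neutral)

lemma Gc0_4: "0 < i \<Longrightarrow> 4 dvd (Gc L 0 $ i)"
proof -
  assume i: "0 < i"
  have ps: "4 dvd (2 * (if s \<le> L \<and> i = s*s then cc (int s) 0 else 0))" for s
  proof -
    have "even (cc (int s) 0)" unfolding cc_def by (rule V_even)
    then obtain m where "cc (int s) 0 = 2*m" by (auto elim: evenE)
    then show ?thesis by auto
  qed
  have "Gc L 0 $ i = (\<Sum>s\<in>{1..L+2}. 2 * (if s \<le> L \<and> i = s*s then cc (int s) 0 else 0))"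
    using i by (simp add: Gc_nth_pair)
  then show ?thesis by (simp only:) (rule dvd_sum, rule ps)
qed


lemma mult_split: "((e::int fps) * g) $ j = 2 * e $ j + (\<Sum>i<j. e $ i * g $ (j - i))" if "g $ 0 = 2"
proof -
  have iv: "{0..j} = insert j {..<j}" by auto
  show ?thesis unfolding fps_mult_nth iv using that by (simp add: mult.commute)
qed

lemma mod4:
  fixes e g r :: "int fps"
  assumes H: "\<forall>i<Mx. (e * g) $ i = r $ i"
    and g0: "g $ 0 = 2" and g4: "\<forall>i>0. 4 dvd g $ i" and gsq: "\<forall>i. g $ i \<noteq> 0 \<longrightarrow> is_sq i"
    and reven: "\<forall>i. even (r $ i)" and rsq: "\<forall>i. r $ i \<noteq> 0 \<longrightarrow> is_sq i"
    and n: "n < Mx" and nosum: "\<forall>a b. a + b = n \<longrightarrow> \<not> (is_sq a \<and> is_sq b)"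
  shows "4 dvd e $ n"
proof -
  have rest4: "4 dvd (\<Sum>i<j. e $ i * g $ (j - i))" for j
    by (rule dvd_sum) (use g4 in auto)
  have ev: "even (e $ j)" if "j < n" "\<not> is_sq j" for j
  proof -
    have "r $ j = 0" using rsq that by blast
    then have "2 * e $ j + (\<Sum>i<j. e $ i * g $ (j - i)) = 0" using H that n mult_split[OF g0, of e j] by simp
    then have "4 dvd 2 * e $ j" using rest4[of j] by (metis add.commute add_cancel_right_left dvd_minus_iff eq_neg_iff_add_eq_0)
    then show ?thesis by auto
  qed
  have nsq: "\<not> is_sq n" using nosum[rule_format, of 0 n] by (auto simp: is_sq_def)
  have "r $ n = 0" using rsq nsq by blast
  then have eq: "2 * e $ n = - (\<Sum>i<n. e $ i * g $ (n - i))" using H n mult_split[OF g0, of e n] by simp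
  have "8 dvd (\<Sum>i<n. e $ i * g $ (n - i))"
  proof (rule dvd_sum)
    fix i assume i: "i \<in> {..<n}"
    show "8 dvd e $ i * g $ (n - i)"
    proof (cases "g $ (n - i) = 0")
      case True then show ?thesis by simp
    next
      case False
      then have "is_sq (n - i)" using gsq by blast
      then have "\<not> is_sq i" using nosum[rule_format, of i "n - i"] i by auto
      then have "even (e $ i)" using ev i by auto
      moreover have "4 dvd g $ (n - i)" using g4 i by auto
      ultimately show ?thesis by (metis dvd_mult_left mult.commute mult_dvd_mono numeral_Bit0 numeral_times_numeral semiring_norm(12) num_double)
    qed
  qed
  then have "8 dvd 2 * e $ n" unfolding eq by simp
  then show ?thesis by presburger
qed

lemma nosum:
  assumes "r \<in> {21, 33::nat}"
  shows "\<forall>a b. a + b = 36*N + r \<longrightarrow> \<not> (is_sq a \<and> is_sq b)"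
proof (intro allI impI notI)
  fix a b assume ab: "a + b = 36*N + r" and sq: "is_sq a \<and> is_sq b"
  then obtain x y where xy: "a = x*x" "b = y*y" by (auto simp: is_sq_def)
  have n3: "(x*x + y*y) mod 3 = 0" using ab xy assms by auto
  have hx: "(x*x) mod 3 = ((x mod 3)*(x mod 3)) mod 3" by (simp add: mod_mult_eq)
  have hy: "(y*y) mod 3 = ((y mod 3)*(y mod 3)) mod 3" by (simp add: mod_mult_eq)
  have hs: "(x*x + y*y) mod 3 = ((x*x) mod 3 + (y*y) mod 3) mod 3" by (simp add: mod_add_eq)
  have h: "(x*x + y*y) mod 3 = ((x mod 3)*(x mod 3) + (y mod 3)*(y mod 3)) mod 3"
    using hx hy hs by (metis mod_add_eq)
  have cx: "x mod 3 = 0 \<or> x mod 3 = 1 \<or> x mod 3 = 2" by arith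
  have cy: "y mod 3 = 0 \<or> y mod 3 = 1 \<or> y mod 3 = 2" by arith
  have "x mod 3 = 0 \<and> y mod 3 = 0" using cx cy n3 h by (elim disjE) simp_all
  then obtain p q where "x = 3*p" "y = 3*q" by (auto elim!: dvdE simp: dvd_eq_mod_eq_0[symmetric])
  then have "9 dvd a + b" using xy by auto
  then have "(36*N + r) mod 9 = 0" using ab by simp
  moreover have "r = 21 \<or> r = 33" using assms by auto
  ultimately show False by (elim disjE) presburger+
qed


theorem mainTheorem15:
  fixes J N r :: nat
  assumes "r \<in> {21, 33}"
  shows "(4::int) dvd m_odd 0 (2 * J + 1) (36 * N + r)"
proof -
  define n where "n = 36 * N + r"
  define t where "t = 2 * J + 1"
  define L where "L = (n + 1) div 2"
  define P where "P = (\<Prod>i<L. [:1, modd_factor 0 (2*i+1):])"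
  have odd: "odd n" using assms unfolding n_def by auto
  have nL: "n < 2*L+1" unfolding L_def by simp
  have m: "m_odd 0 t n = coeff P t $ n" unfolding P_def L_def by (rule m_odd_eq[OF odd])
  have "small (2*L+1) (coeff P t * Gc L 0 - Gc L t)" unfolding P_def by (rule key)
  then have H: "\<forall>i<2*L+1. (coeff P t * Gc L 0) $ i = Gc L t $ i" by (simp add: small_def)
  have "4 dvd coeff P t $ n"
  proof (rule mod4[OF H])
    show "Gc L 0 $ 0 = 2" by (rule Gc00)
    show "\<forall>i>0. 4 dvd Gc L 0 $ i" using Gc0_4 by blast
    show "\<forall>i. Gc L 0 $ i \<noteq> 0 \<longrightarrow> is_sq i" using Gc_sq by blast
    show "\<forall>i. even (Gc L t $ i)" using Gc_even by blast
    show "\<forall>i. Gc L t $ i \<noteq> 0 \<longrightarrow> is_sq i" using Gc_sq by blast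
    show "n < 2*L+1" by (rule nL)
    show "\<forall>a b. a + b = n \<longrightarrow> \<not> (is_sq a \<and> is_sq b)" unfolding n_def by (rule nosum[OF assms])
  qed
  then show ?thesis using m unfolding n_def t_def by simp
qed

end
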